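(* Let $\mathscr G=(\mathscr V,\mathscr E)$ be a finite connected graph with $N$ vertices and $M\ge0$ an integer. The unique stationary distribution $\pi_X$ of the uniform reshuffling model on $\mathscr C_{N,M}$ is the uniform distribution on $\mathscr C_{N,M}$.
   Context: $\mathscr C_{N,M}$ is the set of maps $\xi:\mathscr V\to\mathbb N$ with $\sum_x\xi(x)=M$. The uniform reshuffling model is the discrete-time Markov chain on $\mathscr C_{N,M}$: at each step an edge $(x,y)\in\mathscr E$ is chosen uniformly at random, $U$ is drawn uniformly from $\{0,1,\dots,X_t(x)+X_t(y)\}$, and $X_{t+1}(x)=U$, $X_{t+1}(y)=X_t(x)+X_t(y)-U$, $X_{t+1}(z)=X_t(z)$ for $z\notin\{x,y\}$. This chain has a unique stationary distribution, denoted $\pi_X$. *)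

theory Defs
  imports Complex_Main
begin

text \<open>A finite simple graph on vertex set V with edges E given as a symmetric,
  irreflexive set of ordered pairs (each undirected edge appears in both orientations).\<close>
definition simple_graph :: "'a set \<Rightarrow> ('a \<times> 'a) set \<Rightarrow> bool" where
  "simple_graph V E \<longleftrightarrow> finite V \<and> E \<subseteq> V \<times> V \<and> sym E \<and> (\<forall>x. (x, x) \<notin> E)"

definition connected_graph :: "'a set \<Rightarrow> ('a \<times> 'a) set \<Rightarrow> bool" where
  "connected_graph V E \<longleftrightarrow> V \<noteq> {} \<and> (\<forall>x\<in>V. \<forall>y\<in>V. (x, y) \<in> E\<^sup>*)"

definition configs :: "'a set \<Rightarrow> nat \<Rightarrow> ('a \<Rightarrow> nat) set" where
  "configs V M = {\<xi>. (\<forall>x. x \<notin> V \<longrightarrow> \<xi> x = 0) \<and> (\<Sum>x\<in>V. \<xi> x) = M}"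

text \<open>One-step transition probability of the uniform reshuffling model from \<xi> to \<eta>:
  choose (x,y) in E uniformly, U uniform in {0..\<xi> x + \<xi> y}, set x to U and y to the rest.\<close>
definition reshuffle_step :: "('a \<times> 'a) set \<Rightarrow> ('a \<Rightarrow> nat) \<Rightarrow> ('a \<Rightarrow> nat) \<Rightarrow> real" where
  "reshuffle_step E \<xi> \<eta> =
     (if E = {} then (if \<eta> = \<xi> then 1 else 0) else (
     \<Sum>(x, y)\<in>E. (1 / real (card E)) *
        (\<Sum>u\<in>{0..\<xi> x + \<xi> y}. (1 / real (\<xi> x + \<xi> y + 1)) *
           (if \<eta> = \<xi>(x := u, y := \<xi> x + \<xi> y - u) then 1 else 0))))"

definition stationary_dist :: "'a set \<Rightarrow> ('a \<times> 'a) set \<Rightarrow> nat \<Rightarrow> (('a \<Rightarrow> nat) \<Rightarrow> real) \<Rightarrow> bool" where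
  "stationary_dist V E M p \<longleftrightarrow>
     (\<forall>\<xi>\<in>configs V M. p \<xi> \<ge> 0) \<and> (\<Sum>\<xi>\<in>configs V M. p \<xi>) = 1 \<and>
     (\<forall>\<eta>\<in>configs V M. (\<Sum>\<xi>\<in>configs V M. p \<xi> * reshuffle_step E \<xi> \<eta>) = p \<eta>)"

end

theory Submission
  imports Defs
begin

definition kern :: "'a \<Rightarrow> 'a \<Rightarrow> ('a \<Rightarrow> nat) \<Rightarrow> ('a \<Rightarrow> nat) \<Rightarrow> real" where
  "kern x y \<xi> \<eta> = (if (\<forall>z. z \<noteq> x \<longrightarrow> z \<noteq> y \<longrightarrow> \<eta> z = \<xi> z) \<and> \<eta> x + \<eta> y = \<xi> x + \<xi> y
     then 1 / real (\<xi> x + \<xi> y + 1) else 0)"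

lemma kern_nonneg: "kern x y \<xi> \<eta> \<ge> 0"
  by (simp add: kern_def)

lemma kern_sym: "kern x y \<xi> \<eta> = kern x y \<eta> \<xi>"
proof (cases "(\<forall>z. z \<noteq> x \<longrightarrow> z \<noteq> y \<longrightarrow> \<eta> z = \<xi> z) \<and> \<eta> x + \<eta> y = \<xi> x + \<xi> y")
  case True
  then have "(\<forall>z. z \<noteq> x \<longrightarrow> z \<noteq> y \<longrightarrow> \<xi> z = \<eta> z) \<and> \<xi> x + \<xi> y = \<eta> x + \<eta> y" by simp
  then show ?thesis using True unfolding kern_def by simp
next
  case False
  then have "\<not> ((\<forall>z. z \<noteq> x \<longrightarrow> z \<noteq> y \<longrightarrow> \<xi> z = \<eta> z) \<and> \<xi> x + \<xi> y = \<eta> x + \<eta> y)" by auto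
  then show ?thesis using False unfolding kern_def by simp
qed

lemma inner_eq:
  assumes "x \<noteq> y"
  shows "(\<Sum>u\<in>{0..\<xi> x + \<xi> y}. (1 / real (\<xi> x + \<xi> y + 1)) *
           (if \<eta> = \<xi>(x := u, y := \<xi> x + \<xi> y - u) then 1 else 0)) = kern x y \<xi> \<eta>"
proof -
  let ?s = "\<xi> x + \<xi> y"
  let ?c = "(\<forall>z. z \<noteq> x \<longrightarrow> z \<noteq> y \<longrightarrow> \<eta> z = \<xi> z) \<and> \<eta> x + \<eta> y = ?s"
  have eq: "(\<eta> = \<xi>(x := u, y := ?s - u)) = (u = \<eta> x \<and> ?c)" if "u \<le> ?s" for u
  proof
    assume h: "\<eta> = \<xi>(x := u, y := ?s - u)"
    then show "u = \<eta> x \<and> ?c" using assms that by auto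
  next
    assume h: "u = \<eta> x \<and> ?c"
    show "\<eta> = \<xi>(x := u, y := ?s - u)"
    proof
      fix z show "\<eta> z = (\<xi>(x := u, y := ?s - u)) z" using h assms by auto
    qed
  qed
  have "(\<Sum>u\<in>{0..?s}. 1/real(?s+1) * (if \<eta> = \<xi>(x := u, y := ?s - u) then 1 else 0))
      = (\<Sum>u\<in>{0..?s}. if u = \<eta> x then (if ?c then 1/real(?s+1) else 0) else 0)"
    by (rule sum.cong) (auto simp: eq)
  also have "\<dots> = (if ?c then 1/real(?s+1) else 0)"
    by auto
  finally show ?thesis by (simp add: kern_def)
qed

lemma step_kern:
  assumes "E \<noteq> {}" "\<forall>x. (x,x) \<notin> E"
  shows "reshuffle_step E \<xi> \<eta> = (\<Sum>e\<in>E. 1 / real (card E) * kern (fst e) (snd e) \<xi> \<eta>)"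
  unfolding reshuffle_step_def if_not_P[OF assms(1)]
proof (rule sum.cong[OF refl])
  fix e assume eE: "e \<in> E"
  obtain x y where e: "e = (x, y)" by (cases e)
  have xy: "x \<noteq> y" using eE e assms(2) by auto
  show "(case e of (x, y) \<Rightarrow> 1 / real (card E) * (\<Sum>u\<in>{0..\<xi> x + \<xi> y}. (1 / real (\<xi> x + \<xi> y + 1)) *
           (if \<eta> = \<xi>(x := u, y := \<xi> x + \<xi> y - u) then 1 else 0))) = 1 / real (card E) * kern (fst e) (snd e) \<xi> \<eta>"
    unfolding e prod.case fst_conv snd_conv inner_eq[OF xy] by (rule refl)
qed

lemma step_sym:
  assumes "\<forall>x. (x,x) \<notin> E"
  shows "reshuffle_step E \<xi> \<eta> = reshuffle_step E \<eta> \<xi>"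
proof (cases "E = {}")
  case True then show ?thesis by (auto simp: reshuffle_step_def)
next
  case False then show ?thesis using assms by (simp add: step_kern kern_sym)
qed

lemma step_nonneg: "reshuffle_step E \<xi> \<eta> \<ge> 0"
proof -
  have "0 \<le> (case e of (x, y) \<Rightarrow> 1 / real (card E) * (\<Sum>u\<in>{0..\<xi> x + \<xi> y}. (1 / real (\<xi> x + \<xi> y + 1)) *
           (if \<eta> = \<xi>(x := u, y := \<xi> x + \<xi> y - u) then 1 else 0)))" for e :: "'a \<times> 'a"
    by (cases e) (simp only: prod.case, intro mult_nonneg_nonneg sum_nonneg, auto)
  then show ?thesis unfolding reshuffle_step_def by (auto intro!: sum_nonneg)
qed

lemma sum_two:
  assumes "finite V" "x \<in> V" "y \<in> V" "x \<noteq> y"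
  shows "sum f V = f x + f y + sum f (V - {x} - {y})"
  using assms sum.remove[of V x f] sum.remove[of "V - {x}" y f] by (auto simp: add.assoc)

lemma configs_upd:
  assumes "\<xi> \<in> configs V M" "x \<in> V" "y \<in> V" "x \<noteq> y" "a + b = \<xi> x + \<xi> y" "finite V"
  shows "\<xi>(x := a, y := b) \<in> configs V M"
proof -
  have "(\<Sum>z\<in>V. (\<xi>(x := a, y := b)) z) = a + b + (\<Sum>z\<in>V - {x} - {y}. (\<xi>(x := a, y := b)) z)"
    using sum_two[OF assms(6,2,3,4), of "\<xi>(x := a, y := b)"] assms(4) by simp
  also have "(\<Sum>z\<in>V - {x} - {y}. (\<xi>(x := a, y := b)) z) = (\<Sum>z\<in>V - {x} - {y}. \<xi> z)"
    by (rule sum.cong) auto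
  also have "a + b + \<dots> = (\<Sum>z\<in>V. \<xi> z)"
    using sum_two[OF assms(6,2,3,4), of \<xi>] assms(5) by simp
  finally have s0: "(\<Sum>z\<in>V. (\<xi>(x := a, y := b)) z) = (\<Sum>z\<in>V. \<xi> z)" .
  have "(\<Sum>z\<in>V. \<xi> z) = M" using assms(1) by (simp add: configs_def)
  with s0 have s: "(\<Sum>z\<in>V. (\<xi>(x := a, y := b)) z) = M" by (rule trans)
  have "\<forall>z. z \<notin> V \<longrightarrow> (\<xi>(x := a, y := b)) z = 0" using assms(1-3) by (auto simp: configs_def)
  then show ?thesis using s by (simp only: configs_def mem_Collect_eq)
qed

lemma finite_configs:
  assumes "finite V" shows "finite (configs V M)"
proof -
  have "configs V M \<subseteq> {f. \<forall>x. (x \<in> V \<longrightarrow> f x \<in> {0..M}) \<and> (x \<notin> V \<longrightarrow> f x = 0)}"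
  proof
    fix \<xi> assume h: "\<xi> \<in> configs V M"
    have "\<xi> x \<le> M" if "x \<in> V" for x
      using h member_le_sum[of x V \<xi>] assms that by (auto simp: configs_def)
    then show "\<xi> \<in> {f. \<forall>x. (x \<in> V \<longrightarrow> f x \<in> {0..M}) \<and> (x \<notin> V \<longrightarrow> f x = 0)}"
      using h by (auto simp: configs_def)
  qed
  then show ?thesis using finite_subset finite_set_of_finite_funs[OF assms, of "{0..M}" 0] by blast
qed

lemma row_sum:
  assumes sg: "simple_graph V E" and xi: "\<xi> \<in> configs V M"
  shows "(\<Sum>\<eta>\<in>configs V M. reshuffle_step E \<xi> \<eta>) = 1"
proof -
  have fV: "finite V" and EV: "E \<subseteq> V \<times> V" and irr: "\<forall>x. (x,x) \<notin> E"
    using sg by (auto simp: simple_graph_def)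
  have fC: "finite (configs V M)" using finite_configs[OF fV] .
  have fE: "finite E" using EV fV finite_subset by blast
  show ?thesis
  proof (cases "E = {}")
    case True then show ?thesis using xi fC by (simp add: reshuffle_step_def)
  next
    case False
    let ?C = "configs V M"
    have edge: "(\<Sum>\<eta>\<in>?C. 1/real(card E) * (\<Sum>u\<in>{0..\<xi> x+\<xi> y}. 1/real(\<xi> x+\<xi> y+1) *
        (if \<eta> = \<xi>(x:=u, y:=\<xi> x+\<xi> y-u) then 1 else 0))) = 1/real(card E)"
      if xy: "(x,y) \<in> E" for x y
    proof -
      have xV: "x \<in> V" "y \<in> V" "x \<noteq> y" using xy EV irr by auto
      have mem: "\<xi>(x:=u, y:=\<xi> x+\<xi> y-u) \<in> ?C" if "u \<le> \<xi> x + \<xi> y" for u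
        using configs_upd[OF xi xV] that fV by auto
      have "(\<Sum>\<eta>\<in>?C. 1/real(card E) * (\<Sum>u\<in>{0..\<xi> x+\<xi> y}. 1/real(\<xi> x+\<xi> y+1) *
        (if \<eta> = \<xi>(x:=u, y:=\<xi> x+\<xi> y-u) then 1 else 0)))
        = (\<Sum>\<eta>\<in>?C. \<Sum>u\<in>{0..\<xi> x+\<xi> y}. 1/real(card E) * (1/real(\<xi> x+\<xi> y+1) *
        (if \<eta> = \<xi>(x:=u, y:=\<xi> x+\<xi> y-u) then 1 else 0)))"
        by (simp add: sum_distrib_left)
      also have "\<dots> = (\<Sum>u\<in>{0..\<xi> x+\<xi> y}. \<Sum>\<eta>\<in>?C. 1/real(card E) * (1/real(\<xi> x+\<xi> y+1) *
        (if \<eta> = \<xi>(x:=u, y:=\<xi> x+\<xi> y-u) then 1 else 0)))"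
        by (rule sum.swap)
      also have "\<dots> = (\<Sum>u\<in>{0..\<xi> x+\<xi> y}. 1/real(card E) * (1/real(\<xi> x+\<xi> y+1)))"
      proof (rule sum.cong)
        fix u assume "u \<in> {0..\<xi> x+\<xi> y}"
        then have m: "\<xi>(x:=u, y:=\<xi> x+\<xi> y-u) \<in> ?C" using mem by auto
        have "(\<Sum>\<eta>\<in>?C. 1/real(card E) * (1/real(\<xi> x+\<xi> y+1) *
          (if \<eta> = \<xi>(x:=u, y:=\<xi> x+\<xi> y-u) then 1 else 0)))
          = (\<Sum>\<eta>\<in>?C. if \<eta> = \<xi>(x:=u, y:=\<xi> x+\<xi> y-u) then 1/real(card E) * (1/real(\<xi> x+\<xi> y+1)) else 0)"
          by (rule sum.cong) auto
        also have "\<dots> = 1/real(card E) * (1/real(\<xi> x+\<xi> y+1))"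
          using fC m by simp
        finally show "(\<Sum>\<eta>\<in>?C. 1/real(card E) * (1/real(\<xi> x+\<xi> y+1) *
          (if \<eta> = \<xi>(x:=u, y:=\<xi> x+\<xi> y-u) then 1 else 0))) = 1/real(card E) * (1/real(\<xi> x+\<xi> y+1))" .
      qed simp
      also have "\<dots> = 1/real(card E)" by simp
      finally show ?thesis .
    qed
    have "(\<Sum>\<eta>\<in>?C. reshuffle_step E \<xi> \<eta>) = (\<Sum>\<eta>\<in>?C. \<Sum>e\<in>E. (case e of (x, y) \<Rightarrow> 1/real(card E) * (\<Sum>u\<in>{0..\<xi> x+\<xi> y}. 1/real(\<xi> x+\<xi> y+1) *
        (if \<eta> = \<xi>(x:=u, y:=\<xi> x+\<xi> y-u) then 1 else 0))))"
      using False by (simp add: reshuffle_step_def)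
    also have "\<dots> = (\<Sum>e\<in>E. \<Sum>\<eta>\<in>?C. (case e of (x, y) \<Rightarrow> 1/real(card E) * (\<Sum>u\<in>{0..\<xi> x+\<xi> y}. 1/real(\<xi> x+\<xi> y+1) *
        (if \<eta> = \<xi>(x:=u, y:=\<xi> x+\<xi> y-u) then 1 else 0))))"
      by (rule sum.swap)
    also have "\<dots> = (\<Sum>e\<in>E. 1/real(card E))"
    proof (rule sum.cong[OF refl])
      fix e assume eE: "e \<in> E"
      obtain x y where e: "e = (x, y)" by (cases e)
      show "(\<Sum>\<eta>\<in>?C. (case e of (x, y) \<Rightarrow> 1/real(card E) * (\<Sum>u\<in>{0..\<xi> x+\<xi> y}. 1/real(\<xi> x+\<xi> y+1) *
        (if \<eta> = \<xi>(x:=u, y:=\<xi> x+\<xi> y-u) then 1 else 0)))) = 1/real(card E)"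
        unfolding e prod.case by (rule edge) (use eE e in simp)
    qed
    also have "\<dots> = 1" using False fE by simp
    finally show ?thesis .
  qed
qed

lemma col_sum:
  assumes sg: "simple_graph V E" and eta: "\<eta> \<in> configs V M"
  shows "(\<Sum>\<xi>\<in>configs V M. reshuffle_step E \<xi> \<eta>) = 1"
proof -
  have irr: "\<forall>x. (x,x) \<notin> E" using sg by (auto simp: simple_graph_def)
  have "(\<Sum>\<xi>\<in>configs V M. reshuffle_step E \<xi> \<eta>) = (\<Sum>\<xi>\<in>configs V M. reshuffle_step E \<eta> \<xi>)"
    using step_sym[OF irr] by simp
  then show ?thesis using row_sum[OF sg eta] by simp
qed

definition rel :: "'a set \<Rightarrow> ('a \<times> 'a) set \<Rightarrow> nat \<Rightarrow> (('a \<Rightarrow> nat) \<times> ('a \<Rightarrow> nat)) set" where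
  "rel V E M = {(\<xi>, \<eta>). \<xi> \<in> configs V M \<and> \<eta> \<in> configs V M \<and> reshuffle_step E \<xi> \<eta> > 0}"

lemma move:
  assumes sg: "simple_graph V E" and xi: "\<xi> \<in> configs V M" and ac: "(a, c) \<in> E"
  shows "(\<xi>, \<xi>(a := 0, c := \<xi> a + \<xi> c)) \<in> rel V E M"
proof -
  have fV: "finite V" and EV: "E \<subseteq> V \<times> V" and irr: "\<forall>x. (x,x) \<notin> E"
    using sg by (auto simp: simple_graph_def)
  have fE: "finite E" using EV fV finite_subset by blast
  have xV: "a \<in> V" "c \<in> V" "a \<noteq> c" using ac EV irr by auto
  let ?\<eta> = "\<xi>(a := 0, c := \<xi> a + \<xi> c)"
  have m: "?\<eta> \<in> configs V M" using configs_upd[OF xi xV] fV by auto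
  have ne: "E \<noteq> {}" using ac by auto
  have k: "kern a c \<xi> ?\<eta> > 0" using xV by (simp add: kern_def)
  have "reshuffle_step E \<xi> ?\<eta> > 0"
    unfolding step_kern[OF ne irr]
    apply (rule sum_pos2[OF fE ac])
    using k ne fE apply (simp add: card_gt_0_iff)
    apply (auto intro!: divide_nonneg_nonneg mult_nonneg_nonneg kern_nonneg)
    done
  then show ?thesis using xi m by (simp add: rel_def)
qed

lemma rel_configs: "(\<xi>, \<eta>) \<in> (rel V E M)\<^sup>* \<Longrightarrow> \<xi> \<in> configs V M \<Longrightarrow> \<eta> \<in> configs V M"
  by (induction rule: rtrancl_induct) (auto simp: rel_def)

lemma path_move:
  assumes sg: "simple_graph V E" and path: "(a, b) \<in> E\<^sup>*"
  shows "\<forall>\<xi>\<in>configs V M. \<exists>\<xi>'. (\<xi>, \<xi>') \<in> (rel V E M)\<^sup>* \<and> (a \<noteq> b \<longrightarrow> \<xi>' a = 0)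
            \<and> {z. \<xi>' z \<noteq> 0} \<subseteq> {z. \<xi> z \<noteq> 0} \<union> {b}"
  using path
proof (induction rule: converse_rtrancl_induct)
  case base
  then show ?case by blast
next
  case (step a c)
  show ?case
  proof
    fix \<xi> assume xi: "\<xi> \<in> configs V M"
    show "\<exists>\<xi>'. (\<xi>, \<xi>') \<in> (rel V E M)\<^sup>* \<and> (a \<noteq> b \<longrightarrow> \<xi>' a = 0)
            \<and> {z. \<xi>' z \<noteq> 0} \<subseteq> {z. \<xi> z \<noteq> 0} \<union> {b}"
    proof (cases "a = b")
      case True then show ?thesis by blast
    next
      case False
      have ac: "a \<noteq> c" using step(1) sg by (auto simp: simple_graph_def)
      let ?\<xi>1 = "\<xi>(a := 0, c := \<xi> a + \<xi> c)"
      have r1: "(\<xi>, ?\<xi>1) \<in> rel V E M" using move[OF sg xi step(1)] .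
      then have m1: "?\<xi>1 \<in> configs V M" by (simp add: rel_def)
      obtain \<xi>'' where h: "(?\<xi>1, \<xi>'') \<in> (rel V E M)\<^sup>*" "c \<noteq> b \<longrightarrow> \<xi>'' c = 0"
          "{z. \<xi>'' z \<noteq> 0} \<subseteq> {z. ?\<xi>1 z \<noteq> 0} \<union> {b}"
        using step(3) m1 by blast
      have "(\<xi>, \<xi>'') \<in> (rel V E M)\<^sup>*" using r1 h(1) by simp
      moreover have "\<xi>'' a = 0"
      proof (rule ccontr)
        assume "\<xi>'' a \<noteq> 0"
        then have "a \<in> {z. ?\<xi>1 z \<noteq> 0} \<union> {b}" using h(3) by blast
        then show False using False ac by simp
      qed
      moreover have "{z. \<xi>'' z \<noteq> 0} \<subseteq> {z. \<xi> z \<noteq> 0} \<union> {b}"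
      proof
        fix z assume "z \<in> {z. \<xi>'' z \<noteq> 0}"
        then have z: "\<xi>'' z \<noteq> 0" by simp
        then have "z \<in> {z. ?\<xi>1 z \<noteq> 0} \<union> {b}" using h(3) by blast
        moreover have "z \<noteq> c \<or> z = b" using z h(2) by auto
        ultimately show "z \<in> {z. \<xi> z \<noteq> 0} \<union> {b}" by (auto split: if_splits)
      qed
      ultimately show ?thesis using False by blast
    qed
  qed
qed

lemma gather:
  assumes sg: "simple_graph V E" and cg: "connected_graph V E" and v0: "v0 \<in> V"
  shows "\<xi> \<in> configs V M \<Longrightarrow> (\<xi>, (\<lambda>z. if z = v0 then M else 0)) \<in> (rel V E M)\<^sup>*"
proof (induction "card ({z. \<xi> z \<noteq> 0} - {v0})" arbitrary: \<xi> rule: less_induct)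
  case less
  have fV: "finite V" using sg by (auto simp: simple_graph_def)
  have supp: "{z. \<xi> z \<noteq> 0} \<subseteq> V" using less.prems by (auto simp: configs_def)
  show ?case
  proof (cases "{z. \<xi> z \<noteq> 0} - {v0} = {}")
    case True
    have z: "\<xi> z = 0" if "z \<noteq> v0" for z using True that by blast
    have "(\<Sum>z\<in>V. \<xi> z) = (\<Sum>z\<in>V. if z = v0 then \<xi> v0 else 0)"
      by (rule sum.cong) (auto simp: z)
    also have "\<dots> = \<xi> v0" using fV v0 by simp
    finally have "\<xi> v0 = M" using less.prems by (simp add: configs_def)
    then have "\<xi> = (\<lambda>z. if z = v0 then M else 0)" using z by auto
    then show ?thesis by simp
  next
    case False
    then obtain a where a: "\<xi> a \<noteq> 0" "a \<noteq> v0" by blast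
    have aV: "a \<in> V" using a supp by blast
    have "(a, v0) \<in> E\<^sup>*" using cg aV v0 by (auto simp: connected_graph_def)
    from path_move[OF sg this, rule_format, OF less.prems] obtain \<xi>' where
      h: "(\<xi>, \<xi>') \<in> (rel V E M)\<^sup>*" "\<xi>' a = 0" "{z. \<xi>' z \<noteq> 0} \<subseteq> {z. \<xi> z \<noteq> 0} \<union> {v0}"
      using a by blast
    have sub: "{z. \<xi>' z \<noteq> 0} - {v0} \<subset> {z. \<xi> z \<noteq> 0} - {v0}" using h(2,3) a by blast
    have fin: "finite ({z. \<xi> z \<noteq> 0} - {v0})" using supp fV finite_subset by blast
    have "card ({z. \<xi>' z \<noteq> 0} - {v0}) < card ({z. \<xi> z \<noteq> 0} - {v0})"
      using psubset_card_mono[OF fin sub] .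
    moreover have "\<xi>' \<in> configs V M" using rel_configs[OF h(1) less.prems] .
    ultimately have "(\<xi>', (\<lambda>z. if z = v0 then M else 0)) \<in> (rel V E M)\<^sup>*" using less.hyps by blast
    then show ?thesis using h(1) by simp
  qed
qed

theorem lemma2:
  fixes V :: "'a set" and E :: "('a \<times> 'a) set" and M :: nat
  assumes "simple_graph V E" and "connected_graph V E"
  shows "stationary_dist V E M (\<lambda>\<xi>. 1 / real (card (configs V M)))
    \<and> (\<forall>p. stationary_dist V E M p \<longrightarrow> (\<forall>\<xi>\<in>configs V M. p \<xi> = 1 / real (card (configs V M))))"
proof -
  note sg = assms(1) and cg = assms(2)
  let ?C = "configs V M"
  have fV: "finite V" and irr: "\<forall>x. (x,x) \<notin> E" using sg by (auto simp: simple_graph_def)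
  have fC: "finite ?C" using finite_configs[OF fV] .
  obtain v0 where v0: "v0 \<in> V" using cg by (auto simp: connected_graph_def)
  let ?\<delta> = "(\<lambda>z. if z = v0 then M else 0) :: 'a \<Rightarrow> nat"
  have dC: "?\<delta> \<in> ?C" using v0 fV by (auto simp: configs_def)
  have cpos: "card ?C > 0" using fC dC card_gt_0_iff by blast
  have part1: "stationary_dist V E M (\<lambda>\<xi>. 1 / real (card ?C))"
    unfolding stationary_dist_def
  proof (intro conjI ballI)
    show "(\<Sum>\<xi>\<in>?C. 1 / real (card ?C)) = 1" using cpos by simp
  next
    fix \<eta> assume eta: "\<eta> \<in> ?C"
    have "(\<Sum>\<xi>\<in>?C. 1 / real (card ?C) * reshuffle_step E \<xi> \<eta>) = 1 / real (card ?C) * (\<Sum>\<xi>\<in>?C. reshuffle_step E \<xi> \<eta>)"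
      by (simp add: sum_distrib_left)
    then show "(\<Sum>\<xi>\<in>?C. 1 / real (card ?C) * reshuffle_step E \<xi> \<eta>) = 1 / real (card ?C)"
      using col_sum[OF sg eta] by simp
  qed simp
  have part2: "\<forall>\<xi>\<in>?C. p \<xi> = 1 / real (card ?C)" if st: "stationary_dist V E M p" for p
  proof -
    have pnn: "\<forall>\<xi>\<in>?C. p \<xi> \<ge> 0" and psum: "(\<Sum>\<xi>\<in>?C. p \<xi>) = 1"
      and pst: "\<forall>\<eta>\<in>?C. (\<Sum>\<xi>\<in>?C. p \<xi> * reshuffle_step E \<xi> \<eta>) = p \<eta>"
      using st by (auto simp: stationary_dist_def)
    define m where "m = Max (p ` ?C)"
    have ple: "p \<xi> \<le> m" if "\<xi> \<in> ?C" for \<xi> using fC that by (simp add: m_def)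
    have bwd: "p \<xi> = m" if "\<xi> \<in> ?C" "\<eta> \<in> ?C" "reshuffle_step E \<xi> \<eta> > 0" "p \<eta> = m" for \<xi> \<eta>
    proof (rule ccontr)
      assume "p \<xi> \<noteq> m"
      then have lt: "p \<xi> < m" using ple[OF that(1)] by simp
      have "p \<eta> = (\<Sum>\<zeta>\<in>?C. p \<zeta> * reshuffle_step E \<zeta> \<eta>)" using bspec[OF pst that(2)] by (rule sym)
      also have "\<dots> < (\<Sum>\<zeta>\<in>?C. m * reshuffle_step E \<zeta> \<eta>)"
      proof (rule sum_strict_mono_ex1[OF fC])
        show "\<forall>x\<in>?C. p x * reshuffle_step E x \<eta> \<le> m * reshuffle_step E x \<eta>"
        proof
          fix x assume "x \<in> ?C"
          show "p x * reshuffle_step E x \<eta> \<le> m * reshuffle_step E x \<eta>"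
            by (rule mult_right_mono[OF ple[OF \<open>x \<in> ?C\<close>] step_nonneg])
        qed
        show "\<exists>a\<in>?C. p a * reshuffle_step E a \<eta> < m * reshuffle_step E a \<eta>"
          using that(1) mult_strict_right_mono[OF lt that(3)] by blast
      qed
      also have "\<dots> = m * (\<Sum>\<zeta>\<in>?C. reshuffle_step E \<zeta> \<eta>)" by (simp add: sum_distrib_left)
      also have "\<dots> = m" using col_sum[OF sg that(2)] by simp
      finally show False using that(4) by simp
    qed
    have fwd: "p \<eta> = m" if "\<xi> \<in> ?C" "\<eta> \<in> ?C" "reshuffle_step E \<xi> \<eta> > 0" "p \<xi> = m" for \<xi> \<eta>
      using bwd[OF that(2,1) _ that(4)] that(3) step_sym[OF irr] by simp
    have reach: "p \<xi> = m \<longleftrightarrow> p \<eta> = m" if "(\<xi>, \<eta>) \<in> (rel V E M)\<^sup>*" for \<xi> \<eta>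
      using that
    proof (induction rule: rtrancl_induct)
      case base then show ?case by simp
    next
      case (step y z)
      then show ?case using bwd fwd by (auto simp: rel_def)
    qed
    obtain \<xi>0 where x0: "\<xi>0 \<in> ?C" "p \<xi>0 = m"
    proof -
      have "p ` ?C \<noteq> {}" using dC by blast
      then have "m \<in> p ` ?C" using fC Max_in[of "p ` ?C"] by (simp add: m_def)
      then show ?thesis using that by blast
    qed
    have pd: "p ?\<delta> = m" using reach[OF gather[OF sg cg v0 x0(1)]] x0(2) by simp
    have all: "p \<xi> = m" if "\<xi> \<in> ?C" for \<xi>
      using reach[OF gather[OF sg cg v0 that]] pd by simp
    have "(\<Sum>\<xi>\<in>?C. p \<xi>) = real (card ?C) * m" using all by simp
    then have "m = 1 / real (card ?C)" using psum cpos by (simp add: field_simps)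
    then show ?thesis using all by simp
  qed
  show ?thesis using part1 part2 by blast
qed

end
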